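(* Let $m\ge1$, let $\mathcal{I}\subseteq\mathcal{M}_m$ be a decreasing monomial set, and let $f=x_{i_1}x_{i_2}$ ($i_1<i_2$) and $g=x_{j_1}x_{j_2}$ ($j_1<j_2$) be monomials with $\gcd(f,g)=1$ and $i_2>j_2$. Then \[ |{\rm LTA}(m,2)\cdot f+{\rm LTA}(m,2)\cdot g|=\frac{|{\rm LTA}(m,2)\cdot f|\cdot |{\rm LTA}(m,2)\cdot g|}{2^{\alpha_{f,g}}}. \]
   Context: $\mathbf{R}_m=\mathbb{F}_2[x_0,\dots,x_{m-1}]/(x_0^2-x_0,\dots,x_{m-1}^2-x_{m-1})$; $\mathcal{M}_m$ is the set of monomials $x_0^{i_0}\cdots x_{m-1}^{i_{m-1}}$, $i_j\in\{0,1\}$; $\gcd$ of monomials is the monomial on the common variables. Order: $f\preceq_w g$ iff every variable of $f$ divides $g$; for equal-degree $f=x_{i_1}\cdots x_{i_s}$, $g=x_{j_1}\cdots x_{j_s}$ (increasing indices), $f\preceq_{sh}g$ iff $i_\ell\le j_\ell$ for all $\ell$; $f\preceq g$ iff $f\preceq_{sh}g^*\preceq_w g$ for some $g^*$; $\mathcal{I}$ is decreasing if $f\in\mathcal{I}$, $g\preceq f$ imply $g\in\mathcal{I}$. ${\rm LTA}(m,2)$ is the set of pairs $(\mathbf{B},\varepsilon)$ with $\mathbf{B}=(b_{i,j})\in\mathbb{F}_2^{m\times m}$ lower triangular with ones on the diagonal and $\varepsilon\in\mathbb{F}_2^m$; for a monomial $u$, $(\mathbf{B},\varepsilon)\cdot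 u\in\mathbf{R}_m$ is obtained by replacing each variable $x_i$ of $u$ by $x_i+\sum_{j<i}b_{i,j}x_j+\varepsilon_i$, and ${\rm LTA}(m,2)\cdot u$ is the set of all such polynomials. For sets $\mathcal{S},\mathcal{T}\subseteq\mathbf{R}_m$, $\mathcal{S}+\mathcal{T}=\{s+t:s\in\mathcal{S},t\in\mathcal{T}\}$. The degree of collision is $\alpha_{f,g}=0$ if $i_2>i_1>j_2>j_1$, $1$ if $i_2>j_2>i_1>j_1$, and $2$ if $i_2>j_2>j_1>i_1$. *)

theory Defs
  imports Complex_Main
begin

text \<open>Elements of R_m = F_2[x_0..x_{m-1}]/(x_i^2 - x_i) are represented by their
  unique multilinear normal form: a finite set of monomials, where a monomial
  x_{i_1}...x_{i_s} is represented by the set of its variable indices {i_1,...,i_s}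
  (a subset of {0..<m}).  Addition in characteristic 2 is symmetric difference.\<close>

type_synonym monomial = "nat set"
type_synonym rpoly = "nat set set"

definition monomials :: "nat \<Rightarrow> monomial set" where
  "monomials m = Pow {..<m}"

definition padd :: "rpoly \<Rightarrow> rpoly \<Rightarrow> rpoly" where
  "padd p q = (p - q) \<union> (q - p)"

text \<open>Product: multiply monomials (x_i^2 = x_i, so product of monomials is the union
  of index sets) and add up coefficients mod 2.\<close>
definition pmul :: "rpoly \<Rightarrow> rpoly \<Rightarrow> rpoly" where
  "pmul p q = {w. odd (card {(a, b). a \<in> p \<and> b \<in> q \<and> a \<union> b = w})}"

definition pone :: rpoly where "pone = {{}}"

definition mono_gcd :: "monomial \<Rightarrow> monomial \<Rightarrow> monomial" where
  "mono_gcd f g = f \<inter> g"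

definition weak_le :: "monomial \<Rightarrow> monomial \<Rightarrow> bool" where
  "weak_le f g \<longleftrightarrow> f \<subseteq> g"

definition sh_le :: "monomial \<Rightarrow> monomial \<Rightarrow> bool" where
  "sh_le f g \<longleftrightarrow> finite f \<and> finite g \<and> card f = card g \<and>
     (\<forall>l < card f. sorted_list_of_set f ! l \<le> sorted_list_of_set g ! l)"

definition mono_le :: "monomial \<Rightarrow> monomial \<Rightarrow> bool" where
  "mono_le f g \<longleftrightarrow> (\<exists>g'. sh_le f g' \<and> weak_le g' g)"

definition decreasing :: "nat \<Rightarrow> monomial set \<Rightarrow> bool" where
  "decreasing m I \<longleftrightarrow> I \<subseteq> monomials m \<and>
     (\<forall>f \<in> I. \<forall>g \<in> monomials m. mono_le g f \<longrightarrow> g \<in> I)"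

definition LTA :: "nat \<Rightarrow> ((nat \<Rightarrow> nat \<Rightarrow> bool) \<times> (nat \<Rightarrow> bool)) set" where
  "LTA m = {(B, eps). (\<forall>i j. B i j \<longrightarrow> i < m \<and> j \<le> i) \<and> (\<forall>i < m. B i i) \<and>
                     (\<forall>i. eps i \<longrightarrow> i < m)}"

definition lin_image :: "(nat \<Rightarrow> nat \<Rightarrow> bool) \<Rightarrow> (nat \<Rightarrow> bool) \<Rightarrow> nat \<Rightarrow> rpoly" where
  "lin_image B eps i = {{i}} \<union> {{j} | j. j < i \<and> B i j} \<union> (if eps i then {{}} else {})"

definition lta_act :: "(nat \<Rightarrow> nat \<Rightarrow> bool) \<Rightarrow> (nat \<Rightarrow> bool) \<Rightarrow> monomial \<Rightarrow> rpoly" where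
  "lta_act B eps u = foldr pmul (map (lin_image B eps) (sorted_list_of_set u)) pone"

definition orbit :: "nat \<Rightarrow> monomial \<Rightarrow> rpoly set" where
  "orbit m u = (\<lambda>(B, eps). lta_act B eps u) ` LTA m"

definition sumset :: "rpoly set \<Rightarrow> rpoly set \<Rightarrow> rpoly set" where
  "sumset S T = {padd s t | s t. s \<in> S \<and> t \<in> T}"

definition alpha :: "nat \<Rightarrow> nat \<Rightarrow> nat \<Rightarrow> nat \<Rightarrow> nat" where
  "alpha i1 i2 j1 j2 =
     (if i2 > i1 \<and> i1 > j2 \<and> j2 > j1 then 0
      else if i2 > j2 \<and> j2 > i1 \<and> i1 > j1 then 1
      else if i2 > j2 \<and> j2 > j1 \<and> j1 > i1 then 2
      else undefined)"

end

theory Submission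
  imports Defs
begin


type_synonym form = "nat set \<times> bool"

definition Lf :: "form \<Rightarrow> rpoly" where
  "Lf x = {{j} | j. j \<in> fst x} \<union> (if snd x then {{}} else {})"

definition cf :: "nat set \<Rightarrow> bool \<Rightarrow> nat set \<Rightarrow> bool \<Rightarrow> nat set \<Rightarrow> bool" where
  "cf S e T f w \<longleftrightarrow> (w = {} \<and> e \<and> f) \<or>
     (\<exists>i. w = {i} \<and> ((i \<in> S \<and> i \<in> T) \<noteq> ((i \<in> S \<and> f) \<noteq> (e \<and> i \<in> T)))) \<or>
     (\<exists>i j. i \<noteq> j \<and> w = {i, j} \<and> ((i \<in> S \<and> j \<in> T) \<noteq> (j \<in> S \<and> i \<in> T)))"

definition PR :: "form \<Rightarrow> form \<Rightarrow> rpoly" where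
  "PR x y = {w. cf (fst x) (snd x) (fst y) (snd y) w}"

lemma PR_empty[simp]: "{} \<in> PR (S,e) (T,f) \<longleftrightarrow> e \<and> f"
  by (auto simp: PR_def cf_def)

lemma PR_single[simp]: "{i} \<in> PR (S,e) (T,f) \<longleftrightarrow> ((i \<in> S \<and> i \<in> T) \<noteq> ((i \<in> S \<and> f) \<noteq> (e \<and> i \<in> T)))"
  by (auto simp: PR_def cf_def)

lemma PR_pair[simp]: "i \<noteq> j \<Longrightarrow> {i,j} \<in> PR (S,e) (T,f) \<longleftrightarrow> ((i \<in> S \<and> j \<in> T) \<noteq> (j \<in> S \<and> i \<in> T))"
  unfolding PR_def cf_def by (auto simp: doubleton_eq_iff)

lemma shape: "w = {} \<or> (\<exists>i. w = {i}) \<or> (\<exists>i j. i \<noteq> j \<and> w = {i,j}) \<or>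
   (\<forall>u v. (u = {} \<or> (\<exists>i. u = {i})) \<longrightarrow> (v = {} \<or> (\<exists>j. v = {j})) \<longrightarrow> u \<union> v \<noteq> w)"
  by auto

lemma PR_shape: "w \<in> PR x y \<Longrightarrow> w = {} \<or> (\<exists>i. w = {i}) \<or> (\<exists>i j. i \<noteq> j \<and> w = {i,j})"
  by (auto simp: PR_def cf_def)

lemma padd_iff[simp]: "w \<in> padd P Q \<longleftrightarrow> (w \<in> P) \<noteq> (w \<in> Q)"
  by (auto simp: padd_def)

lemma PR_eqI:
  assumes "\<And>w. w \<in> P \<Longrightarrow> w = {} \<or> (\<exists>i. w = {i}) \<or> (\<exists>i j. i \<noteq> j \<and> w = {i,j})"
    and "\<And>w. w \<in> Q \<Longrightarrow> w = {} \<or> (\<exists>i. w = {i}) \<or> (\<exists>i j. i \<noteq> j \<and> w = {i,j})"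
    and "{} \<in> P \<longleftrightarrow> {} \<in> Q"
    and "\<And>i. {i} \<in> P \<longleftrightarrow> {i} \<in> Q"
    and "\<And>i j. i \<noteq> j \<Longrightarrow> {i,j} \<in> P \<longleftrightarrow> {i,j} \<in> Q"
  shows "P = Q"
proof (rule set_eqI)
  fix w show "w \<in> P \<longleftrightarrow> w \<in> Q"
    using assms(1)[of w] assms(2)[of w] assms(3-5) by blast
qed

lemma pairs_empty: "{(u, v). u \<in> Lf (S,e) \<and> v \<in> Lf (T,f) \<and> u \<union> v = {}} = (if e \<and> f then {({},{})} else {})"
  by (auto simp: Lf_def)

lemma pairs_single: "{(u, v). u \<in> Lf (S,e) \<and> v \<in> Lf (T,f) \<and> u \<union> v = {i}} =
   (if i \<in> S \<and> i \<in> T then {({i},{i})} else {}) \<union> (if i \<in> S \<and> f then {({i},{})} else {})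
   \<union> (if e \<and> i \<in> T then {({},{i})} else {})"
  by (auto simp: Lf_def)

lemma pairs_pair: "i \<noteq> j \<Longrightarrow> {(u, v). u \<in> Lf (S,e) \<and> v \<in> Lf (T,f) \<and> u \<union> v = {i,j}} =
   (if i \<in> S \<and> j \<in> T then {({i},{j})} else {}) \<union> (if j \<in> S \<and> i \<in> T then {({j},{i})} else {})"
  by (auto simp: Lf_def doubleton_eq_iff)



lemma pmul_Lf: "pmul (Lf (S,e)) (Lf (T,f)) = PR (S,e) (T,f)"
proof (rule set_eqI)
  fix w
  let ?P = "{(u, v). u \<in> Lf (S,e) \<and> v \<in> Lf (T,f) \<and> u \<union> v = w}"
  have "w \<in> pmul (Lf (S,e)) (Lf (T,f)) \<longleftrightarrow> odd (card ?P)" by (simp add: pmul_def)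
  also have "\<dots> \<longleftrightarrow> w \<in> PR (S,e) (T,f)"
  proof -
    consider "w = {}" | i where "w = {i}" | i j where "i \<noteq> j" "w = {i,j}"
      | "\<forall>u v. (u = {} \<or> (\<exists>i. u = {i})) \<longrightarrow> (v = {} \<or> (\<exists>j. v = {j})) \<longrightarrow> u \<union> v \<noteq> w"
      using shape[of w] by blast
    then show ?thesis
    proof cases
      case 1 then show ?thesis by (simp only: 1 pairs_empty) simp
    next
      case (2 i) then show ?thesis by (simp only: 2 pairs_single) (cases "i \<in> S"; cases "i \<in> T"; cases e; cases f; simp)
    next
      case (3 i j) then show ?thesis by (simp only: 3 pairs_pair[OF 3(1)]) (cases "i \<in> S"; cases "i \<in> T"; cases "j \<in> S"; cases "j \<in> T"; simp add: 3(1))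
    next
      case 4
      have L: "u \<in> Lf x \<Longrightarrow> u = {} \<or> (\<exists>i. u = {i})" for u x by (auto simp: Lf_def split: if_splits)
      have Pe: "?P = {}"
      proof (rule ccontr)
        assume "?P \<noteq> {}"
        then obtain u v where "u \<in> Lf (S,e)" "v \<in> Lf (T,f)" "u \<union> v = w" by blast
        moreover note L[of u "(S,e)"] L[of v "(T,f)"]
        ultimately show False using 4 by metis
      qed
      have nPR: "w \<notin> PR (S,e) (T,f)"
      proof
        assume "w \<in> PR (S,e) (T,f)"
        from PR_shape[OF this] show False
        proof (elim disjE exE conjE)
          assume "w = {}" then show False using 4 by blast
        next
          fix i assume "w = {i}" then show False using 4 by blast
        next
          fix i j assume "w = {i,j}" then show False using 4 spec[OF spec[OF 4, of "{i}"], of "{j}"] by auto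
        qed
      qed
      show ?thesis using nPR by (simp only: Pe card.empty) simp
    qed
  qed
  finally show "w \<in> pmul (Lf (S,e)) (Lf (T,f)) \<longleftrightarrow> w \<in> PR (S,e) (T,f)" .
qed

lemma pmul_pone: "pmul p pone = p"
proof (rule set_eqI)
  fix w
  have "{(u, v). u \<in> p \<and> v \<in> pone \<and> u \<union> v = w} = (if w \<in> p then {(w,{})} else {})"
    by (auto simp: pone_def)
  then show "w \<in> pmul p pone \<longleftrightarrow> w \<in> p" by (simp add: pmul_def)
qed

lemma lin_image_Lf: "lin_image B eps i = Lf ({i} \<union> {j. j < i \<and> B i j}, eps i)"
  by (auto simp: lin_image_def Lf_def)

lemma lta_act2: "a < b \<Longrightarrow> lta_act B eps {a,b} =
   PR ({a} \<union> {j. j < a \<and> B a j}, eps a) ({b} \<union> {j. j < b \<and> B b j}, eps b)"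
  by (simp add: lta_act_def pmul_pone lin_image_Lf pmul_Lf)



definition fadd :: "form \<Rightarrow> form \<Rightarrow> form" where
  "fadd x y = ((fst x - fst y) \<union> (fst y - fst x), snd x \<noteq> snd y)"

lemma fadd_simp[simp]: "fadd (S,e) (T,f) = ((S - T) \<union> (T - S), e \<noteq> f)"
  by (simp add: fadd_def)

definition "fone = ({}::nat set, True)"
definition "fzero = ({}::nat set, False)"

lemma PR_shape': "w \<in> PR x y \<Longrightarrow> w = {} \<or> (\<exists>i. w = {i}) \<or> (\<exists>i j. i \<noteq> j \<and> w = {i,j})"
  by (rule PR_shape)

lemma padd_shape: "w \<in> padd (PR x y) (PR z u) \<Longrightarrow> w = {} \<or> (\<exists>i. w = {i}) \<or> (\<exists>i j. i \<noteq> j \<and> w = {i,j})"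
  unfolding padd_def using PR_shape[of w x y] PR_shape[of w z u] by blast

lemma PR_bilin: "PR x (fadd y z) = padd (PR x y) (PR x z)"
proof -
  obtain S e where x: "x = (S,e)" by force
  obtain T f where y: "y = (T,f)" by force
  obtain U g where z: "z = (U,g)" by force
  show ?thesis unfolding x y z
    by (rule PR_eqI[OF PR_shape' padd_shape]) auto
qed

lemma PR_sym: "PR x y = PR y x"
proof -
  obtain S e where x: "x = (S,e)" by force
  obtain T f where y: "y = (T,f)" by force
  show ?thesis unfolding x y
    by (rule PR_eqI[OF PR_shape' PR_shape']) auto
qed

lemma PR_self: "PR x x = PR x fone"
proof -
  obtain S e where x: "x = (S,e)" by force
  show ?thesis unfolding x fone_def
    by (rule PR_eqI[OF PR_shape' PR_shape']) auto
qed

lemma PR_zero: "PR fzero fzero = {}"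
  using PR_shape by (fastforce simp: fzero_def)

lemma padd_comm: "padd p q = padd q p" by (auto simp: padd_def)
lemma padd_assoc: "padd (padd p q) r = padd p (padd q r)" by (auto simp: padd_def)
lemma padd_self: "padd p p = {}" by (auto simp: padd_def)
lemma padd_empty: "padd p {} = p" by (auto simp: padd_def)
lemma padd_cancel: "padd p q = padd p r \<Longrightarrow> q = r"
  by (metis padd_iff set_eqI)

lemma inv1: "PR x (fadd (fadd y x) fone) = PR x y"
  by (simp add: PR_bilin PR_self padd_assoc padd_self padd_empty)

definition P4 :: "form \<Rightarrow> form \<Rightarrow> form \<Rightarrow> form \<Rightarrow> rpoly" where
  "P4 x1 x2 x3 x4 = padd (PR x1 x2) (PR x3 x4)"

lemma inv2: "P4 x1 (fadd x2 x3) x3 (fadd x4 x1) = P4 x1 x2 x3 x4"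
proof -
  have "P4 x1 (fadd x2 x3) x3 (fadd x4 x1) =
    padd (padd (PR x1 x2) (PR x1 x3)) (padd (PR x3 x4) (PR x1 x3))"
    by (simp add: P4_def PR_bilin PR_sym[of x3 x1])
  also have "\<dots> = P4 x1 x2 x3 x4"
    unfolding P4_def by (auto simp: padd_def)
  finally show ?thesis .
qed

lemma inv3: "P4 x1 (fadd x2 x4) (fadd x3 x1) x4 = P4 x1 x2 x3 x4"
proof -
  have "P4 x1 (fadd x2 x4) (fadd x3 x1) x4 =
    padd (padd (PR x1 x2) (PR x1 x4)) (padd (PR x3 x4) (PR x1 x4))"
    by (simp add: P4_def PR_bilin PR_sym[of "fadd x3 x1" x4] PR_sym[of x4 x3] PR_sym[of x4 x1])
  also have "\<dots> = P4 x1 x2 x3 x4"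
    unfolding P4_def by (auto simp: padd_def)
  finally show ?thesis .
qed

lemma inv4: "P4 x1 x2 x3 (fadd (fadd x4 x3) fone) = P4 x1 x2 x3 x4"
  by (simp add: P4_def inv1)

lemma inv5: "P4 x1 (fadd (fadd x2 x1) fone) x3 x4 = P4 x1 x2 x3 x4"
  by (simp add: P4_def inv1)

definition Aff :: "nat \<Rightarrow> nat set \<Rightarrow> form set" where
  "Aff k E = {(S,e). S \<subseteq> {..k} \<and> k \<in> S \<and> S \<inter> E = {}}"

lemma recover:
  assumes "(A,e1) \<in> Aff a {}" "(B,e2) \<in> Aff b {a}" "a < b" "C \<subseteq> {..<b}" "D \<subseteq> {..<b}"
    "a \<notin> C" "a \<notin> D" "P = padd (PR (A,e1) (B,e2)) (PR (C,e3) (D,e4))"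
  shows "A = {i. i \<noteq> b \<and> {i,b} \<in> P}" "e1 = ({b} \<in> P)"
    "B = {i. i \<noteq> a \<and> {i,a} \<in> P}" "e2 = ({a} \<in> P)"
proof -
  have bA: "b \<notin> A" "b \<in> B" "b \<notin> C" "b \<notin> D" "a \<in> A" "a \<notin> B"
    using assms(1-5) by (auto simp: Aff_def)
  have 1: "{i,b} \<in> P \<longleftrightarrow> i \<in> A" if "i \<noteq> b" for i using bA assms(8) that by simp
  have 2: "{i,a} \<in> P \<longleftrightarrow> i \<in> B" if "i \<noteq> a" for i using bA assms(6-8) that by simp
  show "A = {i. i \<noteq> b \<and> {i,b} \<in> P}"
  proof (rule set_eqI)
    fix i show "i \<in> A \<longleftrightarrow> i \<in> {i. i \<noteq> b \<and> {i,b} \<in> P}" using 1[of i] bA by (cases "i = b") auto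
  qed
  show "e1 = ({b} \<in> P)" using bA assms(8) by auto
  show "B = {i. i \<noteq> a \<and> {i,a} \<in> P}"
  proof (rule set_eqI)
    fix i show "i \<in> B \<longleftrightarrow> i \<in> {i. i \<noteq> a \<and> {i,a} \<in> P}" using 2[of i] bA by (cases "i = a") auto
  qed
  show "e2 = ({a} \<in> P)" using bA assms(6-8) by auto
qed



lemma card_Aff: assumes "k \<notin> E" shows "card (Aff k E) = 2 * 2 ^ (k - card (E \<inter> {..<k}))"
proof -
  let ?SS = "{S. S \<subseteq> {..k} \<and> k \<in> S \<and> S \<inter> E = {}}"
  have 1: "Aff k E = ?SS \<times> UNIV" by (auto simp: Aff_def)
  have 2: "?SS = insert k ` Pow ({..<k} - E)"
  proof (rule set_eqI)
    fix S show "S \<in> ?SS \<longleftrightarrow> S \<in> insert k ` Pow ({..<k} - E)"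
    proof
      assume "S \<in> ?SS"
      then have "S = insert k (S - {k})" "S - {k} \<in> Pow ({..<k} - E)" by (auto simp: subset_iff less_le)
      then show "S \<in> insert k ` Pow ({..<k} - E)" by blast
    next
      assume "S \<in> insert k ` Pow ({..<k} - E)"
      then show "S \<in> ?SS" using assms by auto
    qed
  qed
  have 3: "inj_on (insert k) (Pow ({..<k} - E))"
    by (rule inj_onI) (metis Diff_insert_absorb PowD lessThan_iff order_less_irrefl subset_iff Diff_iff)
  have 4: "card ({..<k} - E) = k - card (E \<inter> {..<k})"
    by (simp add: card_Diff_subset_Int Int_commute)
  have "card ?SS = 2 ^ (k - card (E \<inter> {..<k}))"
    unfolding 2 card_image[OF 3] by (simp add: card_Pow 4)
  then show ?thesis unfolding 1 card_cartesian_product by simp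
qed

lemma Aff_mono: "Aff k E \<subseteq> Aff k {}" by (auto simp: Aff_def)

lemma orbit_eq: assumes "a < b" "b < m"
  shows "orbit m {a,b} = (\<lambda>(x,y). PR x y) ` (Aff a {} \<times> Aff b {})"
proof
  show "orbit m {a,b} \<subseteq> (\<lambda>(x,y). PR x y) ` (Aff a {} \<times> Aff b {})"
  proof
    fix p assume "p \<in> orbit m {a,b}"
    then obtain B eps where "(B,eps) \<in> LTA m" "p = lta_act B eps {a,b}" by (auto simp: orbit_def)
    then have "p = PR ({a} \<union> {j. j < a \<and> B a j}, eps a) ({b} \<union> {j. j < b \<and> B b j}, eps b)"
      using lta_act2[OF assms(1)] by simp
    moreover have "({a} \<union> {j. j < a \<and> B a j}, eps a) \<in> Aff a {}" "({b} \<union> {j. j < b \<and> B b j}, eps b) \<in> Aff b {}"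
      by (auto simp: Aff_def)
    ultimately show "p \<in> (\<lambda>(x,y). PR x y) ` (Aff a {} \<times> Aff b {})" by force
  qed
next
  show "(\<lambda>(x,y). PR x y) ` (Aff a {} \<times> Aff b {}) \<subseteq> orbit m {a,b}"
  proof
    fix p assume "p \<in> (\<lambda>(x,y). PR x y) ` (Aff a {} \<times> Aff b {})"
    then obtain S e T f where ST: "(S,e) \<in> Aff a {}" "(T,f) \<in> Aff b {}" "p = PR (S,e) (T,f)" by auto
    define B where "B = (\<lambda>i j. i < m \<and> j \<le> i \<and> (j = i \<or> (i = a \<and> j \<in> S) \<or> (i = b \<and> j \<in> T)))"
    define eps where "eps = (\<lambda>i. (i = a \<and> e) \<or> (i = b \<and> f))"
    have L: "(B, eps) \<in> LTA m" using assms by (auto simp: LTA_def B_def eps_def)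
    have "{a} \<union> {j. j < a \<and> B a j} = S" using ST assms by (auto simp: B_def Aff_def)
    moreover have "{b} \<union> {j. j < b \<and> B b j} = T" using ST assms by (auto simp: B_def Aff_def)
    moreover have "eps a = e" "eps b = f" using assms by (auto simp: eps_def)
    ultimately have "p = lta_act B eps {a,b}" using lta_act2[OF assms(1), of B eps] ST by simp
    then show "p \<in> orbit m {a,b}" using L unfolding orbit_def by force
  qed
qed



lemma PR_recover2:
  assumes "x \<in> Aff a {}" "y \<in> Aff b {a}" "x' \<in> Aff a {}" "y' \<in> Aff b {a}" "a < b"
    "PR x y = PR x' y'"
  shows "x = x' \<and> y = y'"
proof -
  obtain A e1 B e2 where xy: "x = (A,e1)" "y = (B,e2)" by force
  obtain A' e1' B' e2' where xy': "x' = (A',e1')" "y' = (B',e2')" by force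
  have z: "PR p q = padd (PR p q) (PR ({},False) ({},False))" for p q
    using PR_zero by (simp add: fzero_def padd_empty)
  let ?P = "PR x y"
  have zz: "?P = padd (PR (A,e1) (B,e2)) (PR ({},False) ({},False))"
    unfolding xy by (rule z)
  have zz': "?P = padd (PR (A',e1') (B',e2')) (PR ({},False) ({},False))"
    unfolding assms(6) xy' by (rule z)
  have m: "(A,e1) \<in> Aff a {}" "(B,e2) \<in> Aff b {a}" "(A',e1') \<in> Aff a {}" "(B',e2') \<in> Aff b {a}"
    using assms xy xy' by auto
  have r: "A = {i. i \<noteq> b \<and> {i,b} \<in> ?P}" "e1 = ({b} \<in> ?P)"
    "B = {i. i \<noteq> a \<and> {i,a} \<in> ?P}" "e2 = ({a} \<in> ?P)"
    using recover[OF m(1) m(2) assms(5) _ _ _ _ zz] by auto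
  have r': "A' = {i. i \<noteq> b \<and> {i,b} \<in> ?P}" "e1' = ({b} \<in> ?P)"
    "B' = {i. i \<noteq> a \<and> {i,a} \<in> ?P}" "e2' = ({a} \<in> ?P)"
    using recover[OF m(3) m(4) assms(5) _ _ _ _ zz'] by auto
  have "A = A'" "e1 = e1'" "B = B'" "e2 = e2'"
    subgoal by (simp only: r(1) r'(1))
    subgoal by (simp only: r(2) r'(2))
    subgoal by (simp only: r(3) r'(3))
    subgoal by (simp only: r(4) r'(4))
    done
  then show ?thesis using xy xy' by simp
qed

lemma orbit_norm: assumes "a < b"
  shows "(\<lambda>(x,y). PR x y) ` (Aff a {} \<times> Aff b {}) = (\<lambda>(x,y). PR x y) ` (Aff a {} \<times> Aff b {a})"
proof
  show "(\<lambda>(x,y). PR x y) ` (Aff a {} \<times> Aff b {a}) \<subseteq> (\<lambda>(x,y). PR x y) ` (Aff a {} \<times> Aff b {})"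
    using Aff_mono by blast
next
  show "(\<lambda>(x,y). PR x y) ` (Aff a {} \<times> Aff b {}) \<subseteq> (\<lambda>(x,y). PR x y) ` (Aff a {} \<times> Aff b {a})"
  proof
    fix p assume "p \<in> (\<lambda>(x,y). PR x y) ` (Aff a {} \<times> Aff b {})"
    then obtain A e1 B e2 where m: "(A,e1) \<in> Aff a {}" "(B,e2) \<in> Aff b {}" "p = PR (A,e1) (B,e2)" by auto
    show "p \<in> (\<lambda>(x,y). PR x y) ` (Aff a {} \<times> Aff b {a})"
    proof (cases "a \<in> B")
      case False
      then have "(B,e2) \<in> Aff b {a}" using m by (auto simp: Aff_def)
      then show ?thesis using m by force
    next
      case True
      let ?y = "fadd (fadd (B,e2) (A,e1)) fone"
      have "?y \<in> Aff b {a}" using m True assms by (auto simp: Aff_def fone_def)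
      moreover have "PR (A,e1) ?y = p" unfolding m(3) by (rule inv1)
      ultimately show ?thesis using m(1) by force
    qed
  qed
qed

lemma orbit_card: assumes "a < b" "b < m"
  shows "card (orbit m {a,b}) = (2 * 2 ^ a) * (2 * 2 ^ (b - 1))"
proof -
  have inj: "inj_on (\<lambda>(x,y). PR x y) (Aff a {} \<times> Aff b {a})"
  proof (rule inj_onI)
    fix p q assume p: "p \<in> Aff a {} \<times> Aff b {a}" and q: "q \<in> Aff a {} \<times> Aff b {a}"
      and e: "(\<lambda>(x,y). PR x y) p = (\<lambda>(x,y). PR x y) q"
    obtain x y where pp: "p = (x,y)" by (cases p) blast
    obtain x' y' where qq: "q = (x',y')" by (cases q) blast
    have "x = x' \<and> y = y'"
      by (rule PR_recover2) (use p q e pp qq assms in auto)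
    then show "p = q" using pp qq by simp
  qed
  have "card (orbit m {a,b}) = card ((\<lambda>(x,y). PR x y) ` (Aff a {} \<times> Aff b {a}))"
    by (simp only: orbit_eq[OF assms] orbit_norm[OF assms(1)])
  also have "\<dots> = card (Aff a {} \<times> Aff b {a})" by (rule card_image[OF inj])
  also have "\<dots> = (2 * 2 ^ a) * (2 * 2 ^ (b - 1))"
  proof -
    have "{a} \<inter> {..<b} = {a}" using assms by auto
    then show ?thesis using assms unfolding card_cartesian_product
      by (simp add: card_Aff)
  qed
  finally show ?thesis .
qed



definition G :: "(form \<times> form) \<times> (form \<times> form) \<Rightarrow> rpoly" where
  "G k = P4 (fst (fst k)) (snd (fst k)) (fst (snd k)) (snd (snd k))"

lemma G_simp[simp]: "G ((x1,x2),(x3,x4)) = P4 x1 x2 x3 x4" by (simp add: G_def)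

lemma sumset_eq: "sumset ((\<lambda>(x,y). PR x y) ` X) ((\<lambda>(x,y). PR x y) ` Y) = G ` (X \<times> Y)"
proof
  show "sumset ((\<lambda>(x,y). PR x y) ` X) ((\<lambda>(x,y). PR x y) ` Y) \<subseteq> G ` (X \<times> Y)"
  proof
    fix p assume "p \<in> sumset ((\<lambda>(x,y). PR x y) ` X) ((\<lambda>(x,y). PR x y) ` Y)"
    then obtain s t where "p = padd s t" "s \<in> (\<lambda>(x,y). PR x y) ` X" "t \<in> (\<lambda>(x,y). PR x y) ` Y"
      by (auto simp: sumset_def)
    then obtain x1 x2 x3 x4 where "p = padd (PR x1 x2) (PR x3 x4)" "(x1,x2) \<in> X" "(x3,x4) \<in> Y" by auto
    then have "p = G ((x1,x2),(x3,x4))" "((x1,x2),(x3,x4)) \<in> X \<times> Y" by (auto simp: P4_def)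
    then show "p \<in> G ` (X \<times> Y)" by blast
  qed
next
  show "G ` (X \<times> Y) \<subseteq> sumset ((\<lambda>(x,y). PR x y) ` X) ((\<lambda>(x,y). PR x y) ` Y)"
  proof
    fix p assume "p \<in> G ` (X \<times> Y)"
    then obtain x1 x2 x3 x4 where "p = padd (PR x1 x2) (PR x3 x4)" "(x1,x2) \<in> X" "(x3,x4) \<in> Y"
      by (auto simp: P4_def G_def)
    then show "p \<in> sumset ((\<lambda>(x,y). PR x y) ` X) ((\<lambda>(x,y). PR x y) ` Y)"
      unfolding sumset_def by force
  qed
qed

lemma Aff_anti: "E \<subseteq> E' \<Longrightarrow> Aff k E' \<subseteq> Aff k E" by (auto simp: Aff_def)

definition KK :: "nat \<Rightarrow> nat \<Rightarrow> nat \<Rightarrow> nat \<Rightarrow> ((form \<times> form) \<times> (form \<times> form)) set" where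
  "KK a b c d = (Aff a {} \<times> Aff b {a}) \<times> (Aff c {a} \<times> Aff d {a,c})"

lemma sum_inj: assumes "a < b" "c < d" "d < b"
  shows "inj_on G (KK a b c d)"
proof (rule inj_onI)
  fix k k' assume k: "k \<in> KK a b c d" and k': "k' \<in> KK a b c d" and e: "G k = G k'"
  obtain A e1 B e2 C e3 D e4 where kk: "k = (((A,e1),(B,e2)),((C,e3),(D,e4)))"
    by (metis prod.collapse)
  obtain A' e1' B' e2' C' e3' D' e4' where kk': "k' = (((A',e1'),(B',e2')),((C',e3'),(D',e4')))"
    by (metis prod.collapse)
  have m: "(A,e1) \<in> Aff a {}" "(B,e2) \<in> Aff b {a}" "(C,e3) \<in> Aff c {a}" "(D,e4) \<in> Aff d {a,c}"
    using k kk by (auto simp: KK_def)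
  have m': "(A',e1') \<in> Aff a {}" "(B',e2') \<in> Aff b {a}" "(C',e3') \<in> Aff c {a}" "(D',e4') \<in> Aff d {a,c}"
    using k' kk' by (auto simp: KK_def)
  have sub: "C \<subseteq> {..<b}" "D \<subseteq> {..<b}" "a \<notin> C" "a \<notin> D"
    using m assms by (auto simp: Aff_def)
  have sub': "C' \<subseteq> {..<b}" "D' \<subseteq> {..<b}" "a \<notin> C'" "a \<notin> D'"
    using m' assms by (auto simp: Aff_def)
  let ?P = "G k"
  have zz: "?P = padd (PR (A,e1) (B,e2)) (PR (C,e3) (D,e4))" by (simp add: kk P4_def)
  have zz': "?P = padd (PR (A',e1') (B',e2')) (PR (C',e3') (D',e4'))" by (simp add: e kk' P4_def)
  note r = recover[OF m(1) m(2) assms(1) sub zz]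
  note r' = recover[OF m'(1) m'(2) assms(1) sub' zz']
  have "A = A'" "e1 = e1'" "B = B'" "e2 = e2'"
    subgoal by (simp only: r(1) r'(1))
    subgoal by (simp only: r(2) r'(2))
    subgoal by (simp only: r(3) r'(3))
    subgoal by (simp only: r(4) r'(4))
    done
  have "PR (C,e3) (D,e4) = PR (C',e3') (D',e4')"
  proof (rule padd_cancel)
    show "padd (PR (A,e1) (B,e2)) (PR (C,e3) (D,e4)) = padd (PR (A,e1) (B,e2)) (PR (C',e3') (D',e4'))"
      using zz zz' \<open>A = A'\<close> \<open>e1 = e1'\<close> \<open>B = B'\<close> \<open>e2 = e2'\<close> by simp
  qed
  moreover have "(C,e3) \<in> Aff c {}" "(D,e4) \<in> Aff d {c}" "(C',e3') \<in> Aff c {}" "(D',e4') \<in> Aff d {c}"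
    using m m' Aff_anti[of "{}" "{a}" c] Aff_anti[of "{c}" "{a,c}" d] by auto
  ultimately have "(C,e3) = (C',e3') \<and> (D,e4) = (D',e4')"
    using PR_recover2 assms(2) by blast
  then show "k = k'" using kk kk' \<open>A = A'\<close> \<open>e1 = e1'\<close> \<open>B = B'\<close> \<open>e2 = e2'\<close> by simp
qed



lemma norm_step:
  assumes ab: "a < b" and cd: "c < d" and db: "d < b" and ac: "a \<noteq> c" and ad: "a \<noteq> d"
    and h: "(A,e1) \<in> Aff a {}" "(B,e2) \<in> Aff b {}" "(C,e3) \<in> Aff c {}" "(D,e4) \<in> Aff d {}"
  shows "\<exists>k \<in> KK a b c d. G k = P4 (A,e1) (B,e2) (C,e3) (D,e4)"
proof -
  have hA: "A \<subseteq> {..a}" "a \<in> A" using h by (auto simp: Aff_def)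
  have hB: "B \<subseteq> {..b}" "b \<in> B" using h by (auto simp: Aff_def)
  have hC: "C \<subseteq> {..c}" "c \<in> C" using h by (auto simp: Aff_def)
  have hD: "D \<subseteq> {..d}" "d \<in> D" using h by (auto simp: Aff_def)
  obtain B1 e21 C1 e31 where s1: "(B1,e21) \<in> Aff b {}" "(C1,e31) \<in> Aff c {a}"
    "P4 (A,e1) (B1,e21) (C1,e31) (D,e4) = P4 (A,e1) (B,e2) (C,e3) (D,e4)"
  proof (cases "a \<in> C")
    case True
    then have "a < c" using hC ac by auto
    let ?x2 = "fadd (B,e2) (D,e4)" and ?x3 = "fadd (C,e3) (A,e1)"
    have "?x2 \<in> Aff b {}" using hB hD db by (auto simp: Aff_def)
    moreover have "?x3 \<in> Aff c {a}" using hA hC \<open>a < c\<close> True by (auto simp: Aff_def)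
    moreover have "P4 (A,e1) ?x2 ?x3 (D,e4) = P4 (A,e1) (B,e2) (C,e3) (D,e4)" by (rule inv3)
    ultimately show ?thesis using that by simp
  next
    case False
    then have "(C,e3) \<in> Aff c {a}" using h by (auto simp: Aff_def)
    then show ?thesis using that h by blast
  qed
  have hB1: "B1 \<subseteq> {..b}" "b \<in> B1" and hC1: "C1 \<subseteq> {..c}" "c \<in> C1" "a \<notin> C1"
    using s1 by (auto simp: Aff_def)
  obtain B2 e22 D2 e42 where s2: "(B2,e22) \<in> Aff b {}" "(D2,e42) \<in> Aff d {a}"
    "P4 (A,e1) (B2,e22) (C1,e31) (D2,e42) = P4 (A,e1) (B1,e21) (C1,e31) (D,e4)"
  proof (cases "a \<in> D")
    case True
    then have "a < d" using hD ad by auto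
    let ?x2 = "fadd (B1,e21) (C1,e31)" and ?x4 = "fadd (D,e4) (A,e1)"
    have "?x2 \<in> Aff b {}" using hB1 hC1 cd db by (auto simp: Aff_def)
    moreover have "?x4 \<in> Aff d {a}" using hA hD \<open>a < d\<close> True by (auto simp: Aff_def)
    moreover have "P4 (A,e1) ?x2 (C1,e31) ?x4 = P4 (A,e1) (B1,e21) (C1,e31) (D,e4)" by (rule inv2)
    ultimately show ?thesis using that by simp
  next
    case False
    then have "(D,e4) \<in> Aff d {a}" using h by (auto simp: Aff_def)
    then show ?thesis using that s1 by blast
  qed
  have hB2: "B2 \<subseteq> {..b}" "b \<in> B2" and hD2: "D2 \<subseteq> {..d}" "d \<in> D2" "a \<notin> D2"
    using s2 by (auto simp: Aff_def)
  obtain D3 e43 where s3: "(D3,e43) \<in> Aff d {a,c}"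
    "P4 (A,e1) (B2,e22) (C1,e31) (D3,e43) = P4 (A,e1) (B2,e22) (C1,e31) (D2,e42)"
  proof (cases "c \<in> D2")
    case True
    let ?x4 = "fadd (fadd (D2,e42) (C1,e31)) fone"
    have "?x4 \<in> Aff d {a,c}" using hD2 hC1 cd True by (auto simp: Aff_def fone_def)
    moreover have "P4 (A,e1) (B2,e22) (C1,e31) ?x4 = P4 (A,e1) (B2,e22) (C1,e31) (D2,e42)" by (rule inv4)
    ultimately show ?thesis using that by (simp add: fone_def)
  next
    case False
    then have "(D2,e42) \<in> Aff d {a,c}" using s2 by (auto simp: Aff_def)
    then show ?thesis using that by blast
  qed
  obtain B3 e23 where s4: "(B3,e23) \<in> Aff b {a}"
    "P4 (A,e1) (B3,e23) (C1,e31) (D3,e43) = P4 (A,e1) (B2,e22) (C1,e31) (D3,e43)"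
  proof (cases "a \<in> B2")
    case True
    let ?x2 = "fadd (fadd (B2,e22) (A,e1)) fone"
    have "?x2 \<in> Aff b {a}" using hB2 hA ab True by (auto simp: Aff_def fone_def)
    moreover have "P4 (A,e1) ?x2 (C1,e31) (D3,e43) = P4 (A,e1) (B2,e22) (C1,e31) (D3,e43)" by (rule inv5)
    ultimately show ?thesis using that by (simp add: fone_def)
  next
    case False
    then have "(B2,e22) \<in> Aff b {a}" using s2 by (auto simp: Aff_def)
    then show ?thesis using that by blast
  qed
  have "(((A,e1),(B3,e23)),((C1,e31),(D3,e43))) \<in> KK a b c d"
    using h s1 s4 s3 by (simp add: KK_def)
  moreover have "G (((A,e1),(B3,e23)),((C1,e31),(D3,e43))) = P4 (A,e1) (B,e2) (C,e3) (D,e4)"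
    using s1 s2 s3 s4 by simp
  ultimately show ?thesis by blast
qed

lemma sum_norm:
  assumes "a < b" "c < d" "d < b" "a \<noteq> c" "a \<noteq> d"
  shows "G ` ((Aff a {} \<times> Aff b {}) \<times> (Aff c {} \<times> Aff d {})) = G ` KK a b c d"
proof
  show "G ` KK a b c d \<subseteq> G ` ((Aff a {} \<times> Aff b {}) \<times> (Aff c {} \<times> Aff d {}))"
    unfolding KK_def using Aff_mono by blast
next
  show "G ` ((Aff a {} \<times> Aff b {}) \<times> (Aff c {} \<times> Aff d {})) \<subseteq> G ` KK a b c d"
  proof
    fix p assume "p \<in> G ` ((Aff a {} \<times> Aff b {}) \<times> (Aff c {} \<times> Aff d {}))"
    then obtain A e1 B e2 C e3 D e4 where h: "(A,e1) \<in> Aff a {}" "(B,e2) \<in> Aff b {}" "(C,e3) \<in> Aff c {}" "(D,e4) \<in> Aff d {}"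
      and p: "p = P4 (A,e1) (B,e2) (C,e3) (D,e4)"
      by (auto simp: G_def)
    show "p \<in> G ` KK a b c d" using norm_step[OF assms h] p by force
  qed
qed



lemma real_div2: "(x::nat) * 2 ^ k = y * z \<Longrightarrow> real x = real y * real z / 2 ^ k"
proof -
  assume "x * 2 ^ k = y * z"
  then have "real x * 2 ^ k = real y * real z" by (metis of_nat_mult of_nat_numeral of_nat_power)
  then show ?thesis by (simp add: field_simps)
qed

theorem proposition1:
  fixes m :: nat and I :: "monomial set" and i1 i2 j1 j2 :: nat
  assumes "m \<ge> 1"
    and "decreasing m I"
    and "i1 < i2" and "i2 < m" and "j1 < j2" and "j2 < m"
    and "mono_gcd {i1, i2} {j1, j2} = {}"
    and "i2 > j2"
  shows "real (card (sumset (orbit m {i1, i2}) (orbit m {j1, j2}))) =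
         real (card (orbit m {i1, i2})) * real (card (orbit m {j1, j2})) / 2 ^ alpha i1 i2 j1 j2"
proof -
  have ac: "i1 \<noteq> j1" and ad: "i1 \<noteq> j2" using assms(7) by (auto simp: mono_gcd_def)
  have "sumset (orbit m {i1, i2}) (orbit m {j1, j2}) = G ` KK i1 i2 j1 j2"
    by (simp only: orbit_eq[OF assms(3,4)] orbit_eq[OF assms(5,6)] sumset_eq
      sum_norm[OF assms(3) assms(5) assms(8) ac ad])
  then have cS0: "card (sumset (orbit m {i1, i2}) (orbit m {j1, j2})) = card (KK i1 i2 j1 j2)"
    using card_image[OF sum_inj[OF assms(3) assms(5) assms(8)]] by simp
  have i2a: "{i1} \<inter> {..<i2} = {i1}" using assms(3) by auto
  have c1: "card (Aff i1 {}) = 2 * 2 ^ i1" using card_Aff[of i1 "{}"] by simp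
  have c2: "card (Aff i2 {i1}) = 2 * 2 ^ (i2 - 1)" using card_Aff[of i2 "{i1}"] i2a assms(3) by simp
  have c3: "card (Aff j1 {i1}) = 2 * 2 ^ (j1 - card ({i1} \<inter> {..<j1}))"
    using card_Aff[of j1 "{i1}"] ac by simp
  have c4: "card (Aff j2 {i1,j1}) = 2 * 2 ^ (j2 - card ({i1,j1} \<inter> {..<j2}))"
    using card_Aff[of j2 "{i1,j1}"] ad assms(5) by simp
  have cS: "card (sumset (orbit m {i1, i2}) (orbit m {j1, j2})) = (2 * 2 ^ i1) * (2 * 2 ^ (i2 - 1)) *
      ((2 * 2 ^ (j1 - card ({i1} \<inter> {..<j1}))) * (2 * 2 ^ (j2 - card ({i1,j1} \<inter> {..<j2}))))"
    unfolding cS0 KK_def card_cartesian_product c1 c2 c3 c4 by simp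
  have o1: "card (orbit m {i1,i2}) = (2 * 2 ^ i1) * (2 * 2 ^ (i2 - 1))" by (rule orbit_card[OF assms(3,4)])
  have o2: "card (orbit m {j1,j2}) = (2 * 2 ^ j1) * (2 * 2 ^ (j2 - 1))" by (rule orbit_card[OF assms(5,6)])
  consider "j1 < j2" "j2 < i1" | "j1 < i1" "i1 < j2" | "i1 < j1"
    using ac ad assms(5) by linarith
  then show ?thesis
  proof cases
    case 1
    have al: "alpha i1 i2 j1 j2 = 0" using 1 assms(3,8) by (simp add: alpha_def)
    have "{i1} \<inter> {..<j1} = {}" "{i1,j1} \<inter> {..<j2} = {j1}" using 1 by auto
    note e = this
    have "card (sumset (orbit m {i1, i2}) (orbit m {j1, j2})) * 2 ^ alpha i1 i2 j1 j2 =
      card (orbit m {i1,i2}) * card (orbit m {j1,j2})"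
      unfolding cS o1 o2 al e by simp
    then show ?thesis by (rule real_div2)
  next
    case 2
    have al: "alpha i1 i2 j1 j2 = 1" using 2 assms(3,8) by (simp add: alpha_def)
    have q1: "{i1} \<inter> {..<j1} = {}" "{i1,j1} \<inter> {..<j2} = {i1,j1}" using 2 by auto
    have q2: "card {i1,j1} = 2" using ac by simp
    have "\<exists>t. j2 = t + 2" using 2 by presburger
    then obtain t where t: "j2 = t + 2" by blast
    have "card (sumset (orbit m {i1, i2}) (orbit m {j1, j2})) * 2 ^ alpha i1 i2 j1 j2 =
      card (orbit m {i1,i2}) * card (orbit m {j1,j2})"
      unfolding cS o1 o2 al q1 q2 by (simp add: t)
    then show ?thesis by (rule real_div2)
  next
    case 3
    have al: "alpha i1 i2 j1 j2 = 2" using 3 assms(3,5,8) by (simp add: alpha_def)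
    have q1: "{i1} \<inter> {..<j1} = {i1}" "{i1,j1} \<inter> {..<j2} = {i1,j1}" using 3 assms(5) by auto
    have q2: "card {i1,j1} = 2" using ac by simp
    have "\<exists>t. j2 = t + 2" using 3 assms(5) by presburger
    then obtain t where t: "j2 = t + 2" by blast
    have "\<exists>s. j1 = s + 1" using 3 by presburger
    then obtain s where s: "j1 = s + 1" by blast
    have "card (sumset (orbit m {i1, i2}) (orbit m {j1, j2})) * 2 ^ alpha i1 i2 j1 j2 =
      card (orbit m {i1,i2}) * card (orbit m {j1,j2})"
      unfolding cS o1 o2 al q1 q2 by (simp add: t s)
    then show ?thesis by (rule real_div2)
  qed
qed

end
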